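(* Let $k\ge 2$, $n\ge1$, and let $L_n$ and $\varphi:L_n\to E^{n-1}$ be as in the context. Then $\varphi$ is injective.
   Context: $E=\{0,\dots,k-1\}$. For $\mathbf a\in E^n$, $w(\mathbf a)=a_1+\dots+a_n$, and $\mathcal B_t=\{\mathbf a\in E^n: w(\mathbf a)=t\}$. Let $g=\lfloor n(k-1)/2\rfloor$ and $C_i=\{\mathbf a\in E^n: a_1=i\}$. Define $L_n=(\mathcal B_0\cup\dots\cup\mathcal B_g)\cap(C_0\cup C_{k-1})$ if $n(k-1)$ is odd, and $L_n=((\mathcal B_0\cup\dots\cup\mathcal B_{g-1})\cap(C_0\cup C_{k-1}))\cup(\mathcal B_g\cap C_0)$ if $n(k-1)$ is even. For $a\in E$ let $\overline a=k-1-a$. Define $\varphi(a_1,\dots,a_n)=(a_2,\dots,a_n)$ if $a_1=0$ and $\varphi(a_1,\dots,a_n)=(\overline{a}_2,\dots,\overline{a}_n)$ if $a_1=k-1$. *)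

theory Defs
  imports Main
begin

text \<open>Words of length n over E = {0,...,k-1}, represented as lists; a_1 is the head.\<close>
definition E_n :: "nat \<Rightarrow> nat \<Rightarrow> nat list set" where
  "E_n k n = {a. length a = n \<and> (\<forall>x\<in>set a. x < k)}"

definition weight :: "nat list \<Rightarrow> nat" where
  "weight a = sum_list a"

definition layer :: "nat \<Rightarrow> nat \<Rightarrow> nat \<Rightarrow> nat list set" where
  "layer k n t = {a \<in> E_n k n. weight a = t}"

definition Cset :: "nat \<Rightarrow> nat \<Rightarrow> nat \<Rightarrow> nat list set" where
  "Cset k n i = {a \<in> E_n k n. a ! 0 = i}"

definition Lset :: "nat \<Rightarrow> nat \<Rightarrow> nat list set" where
  "Lset k n = (let g = n * (k - 1) div 2 in
     if odd (n * (k - 1))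
     then (\<Union>t\<in>{0..g}. layer k n t) \<inter> (Cset k n 0 \<union> Cset k n (k - 1))
     else ((\<Union>t\<in>{0..<g}. layer k n t) \<inter> (Cset k n 0 \<union> Cset k n (k - 1)))
          \<union> (layer k n g \<inter> Cset k n 0))"

definition bar :: "nat \<Rightarrow> nat \<Rightarrow> nat" where
  "bar k a = k - 1 - a"

definition phi :: "nat \<Rightarrow> nat list \<Rightarrow> nat list" where
  "phi k a = (if a ! 0 = 0 then tl a else map (bar k) (tl a))"

end

theory Submission
  imports Defs
begin

lemma bar_sum: "\<forall>x\<in>set xs. x < k \<Longrightarrow> sum_list (map (bar k) xs) + sum_list xs = length xs * (k - 1)"
  by (induction xs) (auto simp: bar_def)

lemma bar_inj: "(x::nat) < k \<Longrightarrow> y < k \<Longrightarrow> k - 1 - x = k - 1 - y \<Longrightarrow> x = y"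
  by arith

lemma L_props:
  assumes "k \<ge> 2" "a \<in> Lset k n"
  shows "a \<in> E_n k n \<and> (a ! 0 = 0 \<or> a ! 0 = k - 1) \<and> 2 * weight a \<le> n * (k - 1)
         \<and> (a ! 0 = k - 1 \<longrightarrow> 2 * weight a < n * (k - 1))"
proof -
  define N where "N = n * (k - 1)"
  define g where "g = N div 2"
  have k0: "k - 1 \<noteq> 0" using assms by simp
  show ?thesis
  proof (cases "odd N")
    case True
    have g2: "2 * g < N" using True unfolding g_def by presburger
    have "a \<in> E_n k n \<and> weight a \<le> g \<and> (a ! 0 = 0 \<or> a ! 0 = k - 1)"
      using assms(2) True unfolding Lset_def Let_def N_def[symmetric] g_def[symmetric]
      by (auto simp: layer_def Cset_def)
    then show ?thesis using g2 unfolding N_def by auto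
  next
    case False
    have g2: "2 * g = N" using False unfolding g_def by presburger
    have "a \<in> E_n k n \<and> ((weight a < g \<and> (a ! 0 = 0 \<or> a ! 0 = k - 1)) \<or> (weight a = g \<and> a ! 0 = 0))"
      using assms(2) False unfolding Lset_def Let_def N_def[symmetric] g_def[symmetric]
      by (auto simp: layer_def Cset_def)
    then show ?thesis using g2 k0 unfolding N_def by auto
  qed
qed

theorem lemma2:
  fixes k n :: nat
  assumes "k \<ge> 2" and "n \<ge> 1"
  shows "inj_on (phi k) (Lset k n) \<and> phi k ` Lset k n \<subseteq> E_n k (n - 1)"
proof
  show "inj_on (phi k) (Lset k n)"
  proof (rule inj_onI)
    fix a b assume a: "a \<in> Lset k n" and b: "b \<in> Lset k n" and e: "phi k a = phi k b"
    note pa = L_props[OF assms(1) a] and pb = L_props[OF assms(1) b]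
    obtain x xs where ax: "a = x # xs" using pa assms(2) unfolding E_n_def by (cases a) auto
    obtain y ys where bb: "b = y # ys" using pb assms(2) unfolding E_n_def by (cases b) auto
    have lx: "length xs = n - 1" "\<forall>z\<in>set xs. z < k" using pa ax unfolding E_n_def by auto
    have ly: "length ys = n - 1" "\<forall>z\<in>set ys. z < k" using pb bb unfolding E_n_def by auto
    have s1: "sum_list (map (bar k) xs) + sum_list xs = (n-1) * (k - 1)" using bar_sum[OF lx(2)] lx(1) by simp
    have s2: "sum_list (map (bar k) ys) + sum_list ys = (n-1) * (k - 1)" using bar_sum[OF ly(2)] ly(1) by simp
    have k0: "k - 1 \<noteq> 0" using assms by simp
    have nk: "n * (k-1) = (n-1)*(k-1) + (k-1)" using assms(2)
      by (cases n) auto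
    show "a = b"
    proof (cases "x = 0")
      case x0: True
      show ?thesis
      proof (cases "y = 0")
        case True then show ?thesis using x0 e ax bb by (simp add: phi_def)
      next
        case False
        then have y1: "y = k - 1" using pb bb by simp
        have "xs = map (bar k) ys" using e x0 False ax bb by (simp add: phi_def)
        then have "weight a + weight b = n * (k - 1)" using s2 ax bb y1 x0 nk
          by (simp add: weight_def)
        moreover have "2 * weight a \<le> n * (k - 1)" "2 * weight b < n * (k - 1)" using pa pb bb y1 by auto
        ultimately show ?thesis by linarith
      qed
    next
      case xn: False
      then have x1: "x = k - 1" using pa ax by simp
      show ?thesis
      proof (cases "y = 0")
        case y0: True
        have "ys = map (bar k) xs" using e y0 xn ax bb by (simp add: phi_def)
        then have "weight a + weight b = n * (k - 1)" using s1 ax bb x1 y0 nk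
          by (simp add: weight_def)
        moreover have "2 * weight b \<le> n * (k - 1)" "2 * weight a < n * (k - 1)" using pa pb ax x1 by auto
        ultimately show ?thesis by linarith
      next
        case False
        have "map (bar k) xs = map (bar k) ys" using e xn False ax bb by (simp add: phi_def)
        moreover have "inj_on (bar k) (set xs \<union> set ys)"
          using lx(2) ly(2) unfolding inj_on_def bar_def by (metis Un_iff bar_inj)
        ultimately have "xs = ys" using inj_on_map_eq_map by blast
        then show ?thesis using False xn pa pb ax bb by simp
      qed
    qed
  qed
next
  show "phi k ` Lset k n \<subseteq> E_n k (n - 1)"
  proof
    fix c assume "c \<in> phi k ` Lset k n"
    then obtain a where a: "a \<in> Lset k n" and c: "c = phi k a" by auto
    have "a \<in> E_n k n" using L_props[OF assms(1) a] by simp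
    then show "c \<in> E_n k (n - 1)" unfolding c E_n_def phi_def
      by (cases a) (auto simp: bar_def)
  qed
qed

end
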